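(* Let $U\subset\mathbb{R}^2$ be bounded, open and contractible with $\partial U$ locally connected, let $f:D^2\to\overline{U}$ be the continuous extension of the inverse of a conformal map $\psi:U\to\operatorname{int}(D^2)$, and let $B=\{x\in S^1: f(x)\text{ is a cutpoint of }\partial U\}$. For $b\in S^1$ the following are equivalent: (1) $b\notin B$; (2) for every $t_0\in\mathbb{R}$ and every continuous map $g:S^1\to\overline{U}\times\mathbb{R}$ with $g(1)=(f(b),t_0)$ and $g(\theta)\in U\times\mathbb{R}$ for all $\theta\neq 1$, there exists a continuous map $G:D^2\to\overline{U}\times\mathbb{R}$ with $G|_{S^1}=g$ and $G(z)\in U\times\mathbb{R}$ for all $z\in\operatorname{int}(D^2)$.
   Context: $D^2\subset\mathbb{C}$ is the closed unit disk, $S^1=\partial D^2$. Since $\partial U$ is locally connected, $\psi^{-1}$ extends continuously to a surjection $f:D^2\to\overline{U}$. A point $z\in\partial U$ is a cutpoint of $\partial U$ if $\partial U\setminus\{z\}$ is not connected. *)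

theory Defs
  imports "HOL-Complex_Analysis.Complex_Analysis"
begin

definition cutpoint :: "complex set \<Rightarrow> complex \<Rightarrow> bool" where
  "cutpoint X z \<longleftrightarrow> z \<in> X \<and> \<not> connected (X - {z})"

end

theory Submission
  imports Defs
begin

lemma cis_lip: "cmod (cis a - cis b) \<le> \<bar>a - b\<bar>"
proof -
  have "(cmod (cis a - cis b))^2 = (cos a - cos b)^2 + (sin a - sin b)^2"
    by (simp add: cmod_power2)
  also have "\<dots> = 2 - 2 * cos (a - b)"
    by (simp add: cos_diff power2_eq_square algebra_simps)
  also have "\<dots> = 4 * (sin ((a - b)/2))^2"
  proof -
    have e: "2 * ((a - b)/2) = a - b" by simp
    have "cos (a - b) = 1 - 2 * (sin ((a - b)/2))^2"
      using cos_double_sin[of "(a-b)/2"] unfolding e .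
    then show ?thesis by simp
  qed
  also have "\<dots> \<le> 4 * ((a - b)/2)^2"
  proof -
    have "\<bar>sin ((a - b)/2)\<bar> \<le> \<bar>(a - b)/2\<bar>" by (rule abs_sin_x_le_abs_x)
    then have "(sin ((a - b)/2))^2 \<le> ((a - b)/2)^2"
      by (metis abs_le_square_iff)
    then show ?thesis by simp
  qed
  also have "\<dots> = \<bar>a - b\<bar>^2" by (simp add: power2_eq_square field_simps)
  finally have "(cmod (cis a - cis b))^2 \<le> \<bar>a - b\<bar>^2" .
  then show ?thesis by (rule power2_le_imp_le) simp
qed

lemma exp_lip: "cmod (exp (\<i> * of_real a) - exp (\<i> * of_real b)) \<le> \<bar>a - b\<bar>"
  using cis_lip[of a b] by (simp add: cis_conv_exp)

lemma rot_cover: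
  fixes c c0 :: complex and N :: nat
  assumes c: "cmod c = 1" and c0: "cmod c0 = 1" and N: "N > 0" and e: "2 * pi / N < e"
  shows "\<exists>k<N. dist (exp (\<i> * of_real (2 * pi * k / N)) * c) c0 < e"
proof -
  define \<theta> where "\<theta> = Arg2pi (c0 / c)"
  have th: "0 \<le> \<theta>" "\<theta> < 2 * pi" using Arg2pi[of "c0/c"] by (auto simp: \<theta>_def)
  have ex: "exp (\<i> * of_real \<theta>) = c0 / c"
    using complex_norm_eq_1_exp[of "c0/c"] c c0 by (simp add: \<theta>_def norm_divide)
  define k where "k = nat \<lfloor>\<theta> * N / (2 * pi)\<rfloor>"
  have Npos: "real N > 0" using N by simp
  have fl: "real k \<le> \<theta> * N / (2 * pi)" "\<theta> * N / (2 * pi) < real k + 1"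
    using th Npos by (auto simp: k_def)
  have kN: "k < N"
  proof -
    have "\<theta> * N / (2 * pi) < N" using th Npos by (simp add: field_simps)
    then show ?thesis using fl(1) by linarith
  qed
  have a1: "2 * pi * k / N \<le> \<theta>" using fl(1) Npos by (simp add: field_simps)
  have a2: "\<theta> < 2 * pi * k / N + 2 * pi / N" using fl(2) Npos by (simp add: field_simps)
  have "dist (exp (\<i> * of_real (2 * pi * k / N)) * c) c0
        = cmod (exp (\<i> * of_real (2 * pi * k / N)) * c - exp (\<i> * of_real \<theta>) * c)"
  proof -
    have "c \<noteq> 0" using c by auto
    have "exp (\<i> * of_real \<theta>) * c = c0" using ex \<open>c \<noteq> 0\<close> by simp
    then show ?thesis by (simp add: dist_norm)
  qed
  also have "\<dots> = cmod (exp (\<i> * of_real (2 * pi * k / N)) - exp (\<i> * of_real \<theta>))"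
    by (simp add: left_diff_distrib[symmetric] norm_mult c)
  also have "\<dots> \<le> \<bar>2 * pi * k / N - \<theta>\<bar>" by (rule exp_lip)
  also have "\<dots> < e" using a1 a2 e by simp
  finally show ?thesis using kN by blast
qed

definition gam :: "complex \<Rightarrow> complex \<Rightarrow> real \<Rightarrow> complex" where
  "gam b b' = linepath b 0 +++ linepath 0 b'"

lemma gam_eq: "gam b b' t = (if t \<le> 1/2 then of_real (1 - 2*t) * b else of_real (2*t - 1) * b')"
  by (simp add: gam_def joinpaths_def linepath_def scaleR_conv_of_real algebra_simps)

lemma gam_path: "path (gam b b')"
  unfolding gam_def by (rule path_join_imp) auto

lemma gam_start: "pathstart (gam b b') = b" and gam_finish: "pathfinish (gam b b') = b'"
  by (auto simp: gam_def)

lemma gam_norm: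
  assumes "cmod b = 1" "cmod b' = 1"
  shows "cmod (gam b b' t) = \<bar>1 - 2*t\<bar>"
proof -
  have "cmod (of_real (1 - 2*t) * b) = \<bar>1 - 2*t\<bar>" by (simp only: norm_mult norm_of_real assms) simp
  moreover have "cmod (of_real (2*t - 1) * b') = \<bar>1 - 2*t\<bar>" by (simp only: norm_mult norm_of_real assms) simp
  ultimately show ?thesis by (simp add: gam_eq)
qed

lemma nm1: "cmod b = 1 \<Longrightarrow> cmod (complex_of_real r * b) = \<bar>r\<bar>"
  by (simp only: norm_mult norm_of_real) simp?

lemma gam_inj:
  assumes b: "cmod b = 1" "cmod b' = 1" "b \<noteq> b'" and st: "gam b b' u = gam b b' t"
  shows "u = t"
proof -
  have b0: "b \<noteq> 0" "b' \<noteq> 0" using b by auto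
  consider "u \<le> 1/2" "t \<le> 1/2" | "u > 1/2" "t > 1/2" | "u \<le> 1/2" "t > 1/2" | "u > 1/2" "t \<le> 1/2"
    by linarith
  then show ?thesis
  proof cases
    case 1
    then have "of_real (1 - 2*u) * b = of_real (1 - 2*t) * b" using st by (simp add: gam_eq)
    then have "complex_of_real (1 - 2*u) = of_real (1 - 2*t)" using b0 by simp
    then show ?thesis by simp
  next
    case 2
    then have "of_real (2*u - 1) * b' = of_real (2*t - 1) * b'" using st by (simp add: gam_eq)
    then have "complex_of_real (2*u - 1) = of_real (2*t - 1)" using b0 by simp
    then show ?thesis by simp
  next
    case 3
    then have e: "of_real (1 - 2*u) * b = of_real (2*t - 1) * b'" using st by (simp add: gam_eq)
    then have "cmod (of_real (1 - 2*u) * b) = cmod (of_real (2*t - 1) * b')" by simp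
    then have "\<bar>1 - 2*u\<bar> = \<bar>2*t - 1\<bar>" by (simp only: nm1[OF b(1)] nm1[OF b(2)])
    then have "1 - 2*u = 2*t - 1" using 3 by arith
    then have r: "complex_of_real (1 - 2*u) = complex_of_real (2*t - 1)" by (rule arg_cong)
    have "of_real (2*t - 1) * b = of_real (2*t - 1) * b'" using e unfolding r .
    moreover have "complex_of_real (2*t - 1) \<noteq> 0" unfolding of_real_eq_0_iff using 3 by simp
    ultimately show ?thesis using b(3) by simp
  next
    case 4
    then have e: "of_real (2*u - 1) * b' = of_real (1 - 2*t) * b" using st by (simp add: gam_eq)
    then have "cmod (of_real (2*u - 1) * b') = cmod (of_real (1 - 2*t) * b)" by simp
    then have "\<bar>2*u - 1\<bar> = \<bar>1 - 2*t\<bar>" by (simp only: nm1[OF b(1)] nm1[OF b(2)])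
    then have "2*u - 1 = 1 - 2*t" using 4 by arith
    then have "of_real (2*u - 1) * b' = of_real (2*u - 1) * b" using e by simp
    moreover have "complex_of_real (2*u - 1) \<noteq> 0" unfolding of_real_eq_0_iff using 4 by simp
    ultimately show ?thesis using b(3) by simp
  qed
qed

lemma gam_ray:
  assumes b: "cmod b = 1" "cmod b' = 1" and c: "cmod c = 1" "c \<noteq> b" "c \<noteq> b'"
    and t: "t > 0" and e: "of_real t * c = gam b b' u"
  shows False
proof (cases "u \<le> 1/2")
  case True
  then have e2: "of_real t * c = of_real (1 - 2*u) * b" using e by (simp add: gam_eq)
  then have "cmod (of_real t * c) = cmod (of_real (1 - 2*u) * b)" by simp
  then have "\<bar>t\<bar> = \<bar>1 - 2*u\<bar>" by (simp only: nm1[OF b(1)] nm1[OF c(1)])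
  then have "t = 1 - 2*u" using t True by arith
  then have "of_real t * c = of_real t * b" using e2 by simp
  then show False using t c by simp
next
  case False
  then have e2: "of_real t * c = of_real (2*u - 1) * b'" using e by (simp add: gam_eq)
  then have "cmod (of_real t * c) = cmod (of_real (2*u - 1) * b')" by simp
  then have "\<bar>t\<bar> = \<bar>2*u - 1\<bar>" by (simp only: nm1[OF b(2)] nm1[OF c(1)])
  then have "t = 2*u - 1" using t False by arith
  then have "of_real t * c = of_real t * b'" using e2 by simp
  then show False using t c by simp
qed


lemma cont_inv_lemma:
  fixes F :: "complex \<Rightarrow> complex" and g1 h :: "complex \<Rightarrow> complex"
  assumes K: "compact K" and contF: "continuous_on K F" and contg: "continuous_on S g1"
    and hK: "\<And>w. w \<in> S \<Longrightarrow> h w \<in> K \<and> F (h w) = g1 w"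
    and uniq: "\<And>w v. w \<in> S \<Longrightarrow> v \<in> K \<Longrightarrow> F v = g1 w \<Longrightarrow> v = h w"
  shows "continuous_on S h"
  unfolding continuous_on_iff
proof (intro ballI allI impI)
  fix x e assume x: "x \<in> S" and e: "(0::real) < e"
  define K' where "K' = K - ball (h x) e"
  have "compact K'" unfolding K'_def by (rule compact_diff[OF K open_ball])
  then have "compact (F ` K')"
    by (rule compact_continuous_image[OF continuous_on_subset[OF contF], rotated]) (auto simp: K'_def)
  then have cl: "closed (F ` K')" by (rule compact_imp_closed)
  have "g1 x \<notin> F ` K'"
  proof
    assume "g1 x \<in> F ` K'"
    then obtain v where v: "v \<in> K'" "F v = g1 x" by auto
    then have "v = h x" using uniq[OF x] by (auto simp: K'_def)
    then show False using v(1) e by (auto simp: K'_def)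
  qed
  then obtain d where d: "d > 0" "\<And>y. y \<in> F ` K' \<Longrightarrow> d \<le> dist (g1 x) y"
    using separate_point_closed[OF cl] by metis
  obtain d2 where d2: "d2 > 0" "\<And>x'. x' \<in> S \<Longrightarrow> dist x' x < d2 \<Longrightarrow> dist (g1 x') (g1 x) < d"
    using contg x d(1) unfolding continuous_on_iff by metis
  show "\<exists>d>0. \<forall>x'\<in>S. dist x' x < d \<longrightarrow> dist (h x') (h x) < e"
  proof (intro exI conjI ballI impI)
    show "d2 > 0" by (rule d2(1))
    fix x' assume x': "x' \<in> S" "dist x' x < d2"
    have "h x' \<notin> K'"
    proof
      assume "h x' \<in> K'"
      then have "F (h x') \<in> F ` K'" by blast
      then have "d \<le> dist (g1 x) (g1 x')" using d(2) hK[OF x'(1)] by simp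
      then show False using d2(2)[OF x'] by (simp add: dist_commute)
    qed
    then show "dist (h x') (h x) < e" using hK[OF x'(1)] by (auto simp: K'_def dist_commute)
  qed
qed

locale setting =
  fixes U :: "complex set" and \<psi> f :: "complex \<Rightarrow> complex"
  assumes opU: "open U"
    and holo: "\<psi> holomorphic_on U" and bij: "bij_betw \<psi> U (ball 0 1)"
    and contf: "continuous_on (cball 0 1) f"
    and finv: "\<forall>z\<in>ball 0 1. f z = inv_into U \<psi> z"
    and fim: "f ` cball 0 1 \<subseteq> closure U"
begin

lemma f_ball: "w \<in> ball 0 1 \<Longrightarrow> f w \<in> U \<and> \<psi> (f w) = w"
proof -
  assume w: "w \<in> ball 0 1"
  have s: "\<psi> ` U = ball 0 1" by (rule bij_betw_imp_surj_on[OF bij])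
  have "f w = inv_into U \<psi> w" using finv w by blast
  then show ?thesis using s w by (simp add: inv_into_into f_inv_into_f)
qed

lemma f_psi: "u \<in> U \<Longrightarrow> f (\<psi> u) = u"
proof -
  assume u: "u \<in> U"
  have "\<psi> u \<in> ball 0 1" by (rule bij_betw_apply[OF bij u])
  then have "f (\<psi> u) = inv_into U \<psi> (\<psi> u)" using finv by blast
  also have "\<dots> = u" by (rule inv_into_f_f[OF bij_betw_imp_inj_on[OF bij] u])
  finally show ?thesis .
qed

lemma psi_U: "u \<in> U \<Longrightarrow> \<psi> u \<in> ball 0 1"
  by (rule bij_betw_apply[OF bij])

lemma inj_f: "inj_on f (ball 0 1)"
  by (rule inj_on_inverseI[where g=\<psi>]) (simp add: f_ball)

lemma contpsi: "continuous_on U \<psi>"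
  by (rule holomorphic_on_imp_continuous_on[OF holo])

lemma f_holo: "f holomorphic_on ball 0 1"
proof -
  have inj: "inj_on \<psi> U" by (rule bij_betw_imp_inj_on[OF bij])
  obtain g where g: "g holomorphic_on (\<psi> ` U)" "\<And>z. z \<in> U \<Longrightarrow> deriv \<psi> z * deriv g (\<psi> z) = 1" "\<And>z. z \<in> U \<Longrightarrow> g (\<psi> z) = z"
    by (rule holomorphic_has_inverse[OF holo opU inj], blast)
  have im: "\<psi> ` U = ball 0 1" by (rule bij_betw_imp_surj_on[OF bij])
  show ?thesis
  proof (rule holomorphic_transform[of g])
    show "g holomorphic_on ball 0 1" using g im by simp
    fix w :: complex
    assume w: "w \<in> ball 0 1"
    have "f w \<in> U" using f_ball[OF w] by simp
    then have "g (\<psi> (f w)) = f w" by (rule g(3))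
    then show "g w = f w" using f_ball[OF w] by simp
  qed
qed

lemma f_sphere_notU: assumes w: "w \<in> sphere 0 1" shows "f w \<notin> U"
proof
  assume u: "f w \<in> U"
  have lp: "w islimpt ball 0 1"
  proof -
    have "w \<in> closure (ball 0 1)" using w by simp
    moreover have "w \<notin> ball 0 1" using w by simp
    ultimately show ?thesis by (simp add: closure_def)
  qed
  then have nt: "at w within ball 0 1 \<noteq> bot" by (simp add: trivial_limit_within)
  have "(f \<longlongrightarrow> f w) (at w within cball 0 1)"
  proof -
    have "w \<in> cball 0 1" using w by simp
    then show ?thesis using contf unfolding continuous_on_def by simp
  qed
  then have t: "(f \<longlongrightarrow> f w) (at w within ball 0 1)"
    by (rule tendsto_within_subset) auto
  have c: "isCont \<psi> (f w)" using contpsi u by (simp add: continuous_on_eq_continuous_at[OF opU])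
  have "((\<lambda>x. \<psi> (f x)) \<longlongrightarrow> \<psi> (f w)) (at w within ball 0 1)"
    by (rule isCont_tendsto_compose[OF c t])
  moreover have "eventually (\<lambda>x. \<psi> (f x) = x) (at w within ball 0 1)"
    unfolding eventually_at_filter by (rule always_eventually) (use f_ball in blast)
  ultimately have "((\<lambda>x. x) \<longlongrightarrow> \<psi> (f w)) (at w within ball 0 1)"
    by (rule Lim_transform_eventually)
  moreover have "((\<lambda>x. x) \<longlongrightarrow> w) (at w within ball 0 1)" by (rule tendsto_ident_at)
  ultimately have "\<psi> (f w) = w" using tendsto_unique[OF nt] by blast
  then show False using psi_U[OF u] w by simp
qed

lemma frontier_eq: "frontier U = f ` sphere 0 1"
proof
  show "f ` sphere 0 1 \<subseteq> frontier U"
  proof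
    fix p assume "p \<in> f ` sphere 0 1"
    then obtain w where w: "w \<in> sphere 0 1" "p = f w" by blast
    have "p \<in> closure U" using fim w by auto
    moreover have "p \<notin> U" using f_sphere_notU[OF w(1)] w(2) by simp
    ultimately show "p \<in> frontier U" by (simp add: frontier_def interior_open[OF opU])
  qed
  show "frontier U \<subseteq> f ` sphere 0 1"
  proof
    fix p assume p: "p \<in> frontier U"
    have "compact (f ` cball 0 1)" by (rule compact_continuous_image[OF contf compact_cball])
    then have cl: "closed (f ` cball 0 1)" by (rule compact_imp_closed)
    have "U \<subseteq> f ` cball 0 1"
    proof
      fix u assume "u \<in> U"
      have "cmod (\<psi> u) < 1" using psi_U[OF \<open>u \<in> U\<close>] by simp
      then have "\<psi> u \<in> cball 0 1" by simp
      moreover have "f (\<psi> u) = u" using f_psi[OF \<open>u \<in> U\<close>] .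
      ultimately show "u \<in> f ` cball 0 1" by (metis image_eqI)
    qed
    then have "closure U \<subseteq> f ` cball 0 1" using cl by (rule closure_minimal)
    moreover have "p \<in> closure U" "p \<notin> U" using p by (auto simp: frontier_def interior_open[OF opU])
    ultimately obtain v where v: "v \<in> cball 0 1" "p = f v" by blast
    have "v \<notin> ball 0 1" using f_ball v \<open>p \<notin> U\<close> by blast
    then have "v \<in> sphere 0 1" using v by auto
    then show "p \<in> f ` sphere 0 1" using v by blast
  qed
qed

lemma f_not_const:
  assumes c0: "c0 \<in> sphere 0 1" and e: "e > 0" and z: "z \<notin> U"
  shows "\<exists>c\<in>sphere 0 1. dist c c0 < e \<and> f c \<noteq> z"
proof (rule ccontr)
  assume "\<not> ?thesis"
  then have cst: "\<And>c. c \<in> sphere 0 1 \<Longrightarrow> dist c c0 < e \<Longrightarrow> f c = z" by blast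
  obtain N :: nat where N: "N > 2 * pi / e" using reals_Archimedean2 by blast
  have Npos: "N > 0" using N e pi_gt_zero
    by (metis divide_pos_pos less_trans mult_pos_pos of_nat_0_less_iff zero_less_numeral)
  have Ne: "2 * pi / N < e" using N e Npos by (simp add: field_simps mult.commute)
  define om where "om = (\<lambda>k::nat. exp (\<i> * of_real (2 * pi * k / N)))"
  have om1: "cmod (om k) = 1" for k by (simp add: om_def)
  define F where "F = (\<lambda>w. \<Prod>k<N. (f (om k * w) - z))"
  have inball: "om k * w \<in> ball 0 1" if "w \<in> ball 0 1" for k w
    using that om1 by (simp add: norm_mult)
  have incball: "om k * w \<in> cball 0 1" if "w \<in> cball 0 1" for k w
    using that om1 by (simp add: norm_mult)
  have holF: "F holomorphic_on ball 0 1"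
    unfolding F_def
  proof (intro holomorphic_on_prod holomorphic_intros)
    fix k assume "k \<in> {..<N}"
    show "(\<lambda>w. f (om k * w)) holomorphic_on ball 0 1"
      by (rule holomorphic_on_compose_gen[OF _ f_holo, unfolded o_def, of _ "ball 0 1"])
         (auto intro: holomorphic_intros inball)
  qed
  have contF: "continuous_on (cball 0 1) F"
    unfolding F_def
  proof (intro continuous_on_prod continuous_intros)
    fix k assume "k \<in> {..<N}"
    show "continuous_on (cball 0 1) (\<lambda>w. f (om k * w))"
      by (rule continuous_on_compose2[OF contf]) (auto intro: continuous_intros incball)
  qed
  have F0: "norm (F w) \<le> 0" if "w \<in> frontier (cball 0 1)" for w
  proof -
    have w: "cmod w = 1" using that by (simp add: frontier_cball)
    obtain k where k: "k < N" "dist (om k * w) c0 < e"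
      using rot_cover[OF w _ Npos Ne, of c0] c0 by (auto simp: om_def)
    have "om k * w \<in> sphere 0 1" using w om1 by (simp add: norm_mult)
    then have "f (om k * w) - z = 0" using cst k by simp
    then have "F w = 0" unfolding F_def using k by (auto intro: prod_zero)
    then show ?thesis by simp
  qed
  have "norm (F 0) \<le> 0"
    by (rule maximum_modulus_frontier[of F "cball 0 1"]) (use holF contF F0 in auto)
  then have "F 0 = 0" by simp
  then obtain k where "k < N" "f (om k * 0) - z = 0" unfolding F_def by (auto simp: prod_zero_iff)
  then have "f 0 = z" by simp
  moreover have "f 0 \<in> U" using f_ball by simp
  ultimately show False using z by simp
qed

lemma jc_props:
  assumes b: "b \<in> sphere 0 1" "b' \<in> sphere 0 1" "b \<noteq> b'" "f b = f b'"
  defines "c \<equiv> f \<circ> gam b b'"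
  shows "simple_path c" "pathfinish c = pathstart c" "pathstart c = f b"
    "path_image c - {f b} \<subseteq> U" "f 0 \<in> path_image c" "f b \<in> path_image c"
    "\<And>s. s \<in> {0<..<1} \<Longrightarrow> gam b b' s \<in> ball 0 1"
    "path_image c = f ` (gam b b' ` {0..1})"
proof -
  have nb: "cmod b = 1" "cmod b' = 1" using b by auto
  have gn: "cmod (gam b b' s) = \<bar>1 - 2 * s\<bar>" for s using gam_norm[OF nb] .
  have gc: "gam b b' s \<in> cball 0 1" if "s \<in> {0..1}" for s using gn[of s] that by auto
  show gb: "gam b b' s \<in> ball 0 1" if "s \<in> {0<..<1}" for s using gn[of s] that by auto
  have g01: "gam b b' 0 = b" "gam b b' 1 = b'" by (simp_all add: gam_eq)
  have pc: "path c" unfolding c_def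
  proof (rule path_continuous_image[OF gam_path])
    have "path_image (gam b b') \<subseteq> cball 0 1" using gc by (auto simp: path_image_def)
    then show "continuous_on (path_image (gam b b')) f" by (rule continuous_on_subset[OF contf])
  qed
  have cend: "c s = f b" if "s \<in> {0,1}" for s using that g01 b(4) by (auto simp: c_def)
  have cin: "c s \<in> U" if "s \<in> {0<..<1}" for s using f_ball[OF gb[OF that]] by (simp add: c_def)
  have fbU: "f b \<notin> U" using f_sphere_notU[OF b(1)] .
  have "loop_free c"
    unfolding loop_free_def
  proof (intro ballI impI)
    fix x y :: real assume x: "x \<in> {0..1}" and y: "y \<in> {0..1}" and e: "c x = c y"
    show "x = y \<or> x = 0 \<and> y = 1 \<or> x = 1 \<and> y = 0"
    proof (cases "x \<in> {0<..<1}")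
      case True
      then have "c x \<in> U" by (rule cin)
      then have yi: "y \<in> {0<..<1}" using e cend fbU y by (cases "y \<in> {0<..<1}") auto
      have "gam b b' x = gam b b' y"
        using inj_onD[OF inj_f _ gb[OF True] gb[OF yi]] e by (simp add: c_def)
      then show ?thesis using gam_inj[OF nb b(3)] by blast
    next
      case False
      then have "x \<in> {0,1}" using x by auto
      then have "c y \<notin> U" using e cend fbU by auto
      have "y \<in> {0,1}"
      proof (rule ccontr)
        assume "y \<notin> {0,1}"
        then have "y \<in> {0<..<1}" using y by auto
        then show False using cin \<open>c y \<notin> U\<close> by blast
      qed
      then show ?thesis using \<open>x \<in> {0,1}\<close> by auto
    qed
  qed
  then show "simple_path c" using pc by (simp add: simple_path_def)
  show "pathfinish c = pathstart c" "pathstart c = f b"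
    using cend by (auto simp: pathfinish_def pathstart_def)
  show pim: "path_image c = f ` (gam b b' ` {0..1})" by (auto simp: path_image_def c_def)
  show "path_image c - {f b} \<subseteq> U"
  proof
    fix x assume "x \<in> path_image c - {f b}"
    then obtain s where s: "s \<in> {0..1}" "x = c s" "x \<noteq> f b" by (auto simp: path_image_def)
    then have "s \<notin> {0,1}" using cend by auto
    then have "s \<in> {0<..<1}" using s by auto
    then show "x \<in> U" using cin s by simp
  qed
  have "c (1/2) = f 0" by (simp add: c_def gam_eq)
  then show "f 0 \<in> path_image c" unfolding path_image_def by (intro image_eqI[where x="1/2"]) auto
  have "c 0 = f b" using cend by simp
  then show "f b \<in> path_image c" unfolding path_image_def by (intro image_eqI[where x=0]) auto
qed

lemma side_point:
  assumes b: "b \<in> sphere 0 1" "b' \<in> sphere 0 1" "b \<noteq> b'" "f b = f b'"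
    and S: "open S" "S \<inter> path_image (f \<circ> gam b b') = {}"
      "closure S \<subseteq> S \<union> path_image (f \<circ> gam b b')" "f 0 \<in> closure S"
    and sep: "\<And>T. connected T \<Longrightarrow> T \<inter> path_image (f \<circ> gam b b') = {} \<Longrightarrow> T \<inter> S \<noteq> {} \<Longrightarrow> T \<subseteq> S"
  shows "\<exists>q\<in>frontier U. q \<in> S \<and> q \<noteq> f b"
proof -
  define J where "J = path_image (f \<circ> gam b b')"
  note jc = jc_props[OF b]
  have nb: "cmod b = 1" "cmod b' = 1" using b by auto
  have fbU: "f b \<notin> U" using f_sphere_notU[OF b(1)] .
  have "f 0 \<in> U" using f_ball by simp
  then have "U \<inter> closure S \<noteq> {}" using S(4) by blast
  then have "U \<inter> S \<noteq> {}" using open_Int_closure_eq_empty[OF opU] by blast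
  then obtain u where u: "u \<in> U" "u \<in> S" by blast
  define W where "W = ball 0 1 \<inter> f -` S"
  have oW: "open W" unfolding W_def
    by (rule continuous_open_preimage[OF continuous_on_subset[OF contf ball_subset_cball] open_ball S(1)])
  have w1: "\<psi> u \<in> W" using psi_U[OF u(1)] f_psi[OF u(1)] u(2) by (simp add: W_def)
  obtain w0 where w0: "w0 \<in> W" "w0 \<noteq> 0"
  proof (cases "\<psi> u = 0")
    case True
    obtain e where e: "e > 0" "ball (\<psi> u) e \<subseteq> W" using oW w1 openE by blast
    have "complex_of_real (e/2) \<in> ball (\<psi> u) e" using True e(1) by (simp add: dist_norm)
    moreover have "complex_of_real (e/2) \<noteq> 0" using e(1) by simp
    ultimately show ?thesis using that e(2) by blast
  next
    case False
    then show ?thesis using that w1 by blast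
  qed
  obtain r where r: "r > 0" "ball w0 r \<subseteq> W" using oW w0(1) openE by blast
  define m where "m = cmod w0"
  have m: "0 < m" "m < 1" using w0 by (auto simp: m_def W_def)
  define c0 where "c0 = w0 / of_real m"
  have c0: "c0 \<in> sphere 0 1" using m by (simp add: c0_def m_def norm_divide)
  obtain c where c: "c \<in> sphere 0 1" "dist c c0 < r / m" "f c \<noteq> f b"
    using f_not_const[OF c0 _ fbU, of "r/m"] r m by auto
  have cb: "c \<noteq> b" "c \<noteq> b'" using c(3) b(4) by auto
  have nc: "cmod c = 1" using c by simp
  define h where "h = (\<lambda>t::real. f (of_real t * c))"
  have wW: "of_real m * c \<in> W"
  proof -
    have "dist (of_real m * c) w0 = dist (of_real m * c) (of_real m * c0)"
      using m by (simp add: c0_def)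
    also have "\<dots> = m * dist c c0"
      using m by (simp add: dist_norm right_diff_distrib[symmetric] norm_mult)
    also have "\<dots> < r" using c(2) m by (simp add: field_simps)
    finally show ?thesis using r(2) by (auto simp: dist_commute)
  qed
  have hS: "h m \<in> S" using wW by (simp add: W_def h_def)
  have tin: "of_real t * c \<in> cball 0 1" if "t \<in> {m..1}" for t
    using that m nc by (simp add: norm_mult)
  have conth: "continuous_on {m..1} h" unfolding h_def
    by (rule continuous_on_compose2[OF contf]) (auto intro!: continuous_intros tin)
  define T where "T = h ` {m..<1}"
  have cT: "connected T" unfolding T_def
    by (rule connected_continuous_image[OF continuous_on_subset[OF conth]]) auto
  have TJ: "T \<inter> J = {}"
  proof (rule ccontr)
    assume "T \<inter> J \<noteq> {}"
    then obtain t x where t: "t \<in> {m..<1}" "x = h t" "x \<in> J" unfolding T_def by blast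
    have tb: "of_real t * c \<in> ball 0 1" using t(1) m nc by (simp add: norm_mult)
    have xU: "x \<in> U" using f_ball[OF tb] t(2) by (simp add: h_def)
    obtain s where s: "s \<in> {0..1}" "x = f (gam b b' s)" using t(3) jc(8) by (auto simp: J_def)
    show False
    proof (cases "s \<in> {0<..<1}")
      case True
      have "of_real t * c = gam b b' s"
        using inj_onD[OF inj_f _ tb jc(7)[OF True]] s(2) t(2) by (simp add: h_def)
      moreover have "t > 0" using t(1) m by auto
      ultimately show False using gam_ray[OF nb nc cb] by blast
    next
      case False
      then have "s = 0 \<or> s = 1" using s(1) by auto
      then have "x = f b" using s(2) b(4) by (auto simp: gam_eq)
      then show False using xU fbU by simp
    qed
  qed
  have "h m \<in> T" using m by (simp add: T_def)
  then have "T \<subseteq> S" using sep[OF cT] TJ hS by (auto simp: J_def)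
  have lim: "(h \<longlongrightarrow> h 1) (at_left 1)"
  proof -
    have "(h \<longlongrightarrow> h 1) (at 1 within {m..1})"
      using conth m unfolding continuous_on_def by auto
    then show ?thesis using at_within_Icc_at_left[OF m(2)] by simp
  qed
  have ev: "eventually (\<lambda>t. h t \<in> closure S) (at_left (1::real))"
  proof (rule eventually_mono[OF eventually_at_left_real[OF m(2)]])
    fix t assume "t \<in> {m<..<1}"
    then have "h t \<in> T" by (simp add: T_def)
    then show "h t \<in> closure S" using \<open>T \<subseteq> S\<close> closure_subset by blast
  qed
  have "h 1 \<in> closure S"
    by (rule Lim_in_closed_set[OF closed_closure ev trivial_limit_at_left_real lim])
  then have fcS: "f c \<in> closure S" by (simp add: h_def)
  have fcF: "f c \<in> frontier U" using c(1) frontier_eq by auto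
  have "f c \<notin> J"
  proof
    assume "f c \<in> J"
    then have "f c \<in> U" using jc(4) c(3) by (auto simp: J_def)
    then show False using fcF opU by (simp add: frontier_def interior_open)
  qed
  then have "f c \<in> S" using fcS S(3) by (auto simp: J_def)
  then show ?thesis using fcF c(3) by blast
qed

lemma two_sides:
  assumes b: "b \<in> sphere 0 1" "b' \<in> sphere 0 1" "b \<noteq> b'" "f b = f b'"
  shows "\<exists>q\<in>frontier U. q \<in> inside (path_image (f \<circ> gam b b')) \<and> q \<noteq> f b"
    and "\<exists>q\<in>frontier U. q \<in> outside (path_image (f \<circ> gam b b')) \<and> q \<noteq> f b"
proof -
  define J where "J = path_image (f \<circ> gam b b')"
  note jc = jc_props[OF b]
  note JIO = Jordan_inside_outside[OF jc(1) jc(2)]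
  have oI: "open (inside J)" and oO: "open (outside J)" using JIO by (auto simp: J_def)
  have IO: "inside J \<inter> outside J = {}" "inside J \<union> outside J = - J" using JIO by (auto simp: J_def)
  have fI: "frontier (inside J) = J" and fO: "frontier (outside J) = J" using JIO by (auto simp: J_def)
  have f0: "f 0 \<in> J" using jc(5) by (simp add: J_def)
  have sepI: "T \<subseteq> inside J" if "connected T" "T \<inter> J = {}" "T \<inter> inside J \<noteq> {}" for T
  proof -
    have "T \<subseteq> inside J \<union> outside J" using that(2) IO(2) by blast
    then have "inside J \<inter> T = {} \<or> outside J \<inter> T = {}"
      using connectedD[OF that(1) oI oO] IO(1) by blast
    then show ?thesis using that(3) \<open>T \<subseteq> inside J \<union> outside J\<close> by blast
  qed
  have sepO: "T \<subseteq> outside J" if "connected T" "T \<inter> J = {}" "T \<inter> outside J \<noteq> {}" for T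
  proof -
    have "T \<subseteq> inside J \<union> outside J" using that(2) IO(2) by blast
    then have "inside J \<inter> T = {} \<or> outside J \<inter> T = {}"
      using connectedD[OF that(1) oI oO] IO(1) by blast
    then show ?thesis using that(3) \<open>T \<subseteq> inside J \<union> outside J\<close> by blast
  qed
  show "\<exists>q\<in>frontier U. q \<in> inside (path_image (f \<circ> gam b b')) \<and> q \<noteq> f b"
    unfolding J_def[symmetric]
  proof (rule side_point[OF b, folded J_def])
    show "open (inside J)" by (rule oI)
    show "inside J \<inter> J = {}" using IO by blast
    show "closure (inside J) \<subseteq> inside J \<union> J" using closure_Un_frontier fI by blast
    show "f 0 \<in> closure (inside J)" using f0 fI unfolding frontier_def by blast
    show "\<And>T. connected T \<Longrightarrow> T \<inter> J = {} \<Longrightarrow> T \<inter> inside J \<noteq> {} \<Longrightarrow> T \<subseteq> inside J"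
      by (rule sepI)
  qed
  show "\<exists>q\<in>frontier U. q \<in> outside (path_image (f \<circ> gam b b')) \<and> q \<noteq> f b"
    unfolding J_def[symmetric]
  proof (rule side_point[OF b, folded J_def])
    show "open (outside J)" by (rule oO)
    show "outside J \<inter> J = {}" using IO by blast
    show "closure (outside J) \<subseteq> outside J \<union> J" using closure_Un_frontier fO by blast
    show "f 0 \<in> closure (outside J)" using f0 fO unfolding frontier_def by blast
    show "\<And>T. connected T \<Longrightarrow> T \<inter> J = {} \<Longrightarrow> T \<inter> outside J \<noteq> {} \<Longrightarrow> T \<subseteq> outside J"
      by (rule sepO)
  qed
qed

lemma two_pre_cut:
  assumes b: "b \<in> sphere 0 1" "b' \<in> sphere 0 1" "b \<noteq> b'" "f b = f b'"
  shows "cutpoint (frontier U) (f b)"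
proof -
  define J where "J = path_image (f \<circ> gam b b')"
  note jc = jc_props[OF b]
  note JIO = Jordan_inside_outside[OF jc(1) jc(2)]
  have oI: "open (inside J)" and oO: "open (outside J)" using JIO by (auto simp: J_def)
  have IO: "inside J \<inter> outside J = {}" "inside J \<union> outside J = - J" using JIO by (auto simp: J_def)
  obtain q1 where q1: "q1 \<in> frontier U" "q1 \<in> inside J" "q1 \<noteq> f b" using two_sides(1)[OF b] by (auto simp: J_def)
  obtain q2 where q2: "q2 \<in> frontier U" "q2 \<in> outside J" "q2 \<noteq> f b" using two_sides(2)[OF b] by (auto simp: J_def)
  have zF: "f b \<in> frontier U" using b(1) frontier_eq by auto
  have sub: "frontier U - {f b} \<subseteq> inside J \<union> outside J"
  proof
    fix x assume x: "x \<in> frontier U - {f b}"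
    have "x \<notin> J"
    proof
      assume "x \<in> J"
      then have "x \<in> U" using jc(4) x by (auto simp: J_def)
      then show False using x opU by (simp add: frontier_def interior_open)
    qed
    then show "x \<in> inside J \<union> outside J" using IO(2) by blast
  qed
  have "\<not> connected (frontier U - {f b})"
  proof
    assume "connected (frontier U - {f b})"
    then have "inside J \<inter> (frontier U - {f b}) = {} \<or> outside J \<inter> (frontier U - {f b}) = {}"
      using connectedD[OF _ oI oO] IO(1) sub by blast
    then show False using q1 q2 by blast
  qed
  then show ?thesis using zF by (simp add: cutpoint_def)
qed

lemma cut_two_pre:
  assumes b: "b \<in> sphere 0 1" and cut: "cutpoint (frontier U) (f b)"
  shows "\<exists>b'\<in>sphere 0 1. b' \<noteq> b \<and> f b' = f b"
proof (rule ccontr)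
  assume "\<not> ?thesis"
  then have uniq: "\<And>b'. b' \<in> sphere 0 1 \<Longrightarrow> f b' = f b \<Longrightarrow> b' = b" by blast
  have eq: "frontier U - {f b} = f ` (sphere 0 1 - {b})"
    using frontier_eq uniq b by auto
  have "(sphere 0 1 - {b}) homeomorphic {x::complex. 1 \<bullet> x = 0}"
    by (rule homeomorphic_punctured_sphere_hyperplane) (use b in auto)
  moreover have "connected {x::complex. 1 \<bullet> x = 0}"
    by (rule convex_connected[OF convex_hyperplane])
  ultimately have "connected (sphere 0 1 - {b::complex})"
    using homeomorphic_connectedness by blast
  then have "connected (f ` (sphere 0 1 - {b}))"
    by (rule connected_continuous_image[OF continuous_on_subset[OF contf], rotated]) auto
  then show False using cut eq by (simp add: cutpoint_def)
qed

lemma fill: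
  assumes b: "b \<in> sphere 0 1" and ncut: "\<not> cutpoint (frontier U) (f b)"
    and contg: "continuous_on (sphere 0 1) g" and gim: "g ` sphere 0 1 \<subseteq> closure U \<times> UNIV"
    and g1: "g 1 = (f b, t0)" and gU: "\<forall>\<theta>\<in>sphere 0 1 - {1}. g \<theta> \<in> U \<times> UNIV"
  shows "\<exists>G :: complex \<Rightarrow> complex \<times> real.
            continuous_on (cball 0 1) G
          \<and> G ` cball 0 1 \<subseteq> closure U \<times> UNIV
          \<and> (\<forall>z\<in>sphere 0 1. G z = g z)
          \<and> (\<forall>z\<in>ball 0 1. G z \<in> U \<times> UNIV)"
proof -
  define g1 where "g1 = (\<lambda>w. fst (g w))"
  define g2 where "g2 = (\<lambda>w. snd (g w))"
  have cg1: "continuous_on (sphere 0 1) g1" unfolding g1_def by (intro continuous_intros contg)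
  have cg2: "continuous_on (sphere 0 1) g2" unfolding g2_def by (intro continuous_intros contg)
  define h where "h = (\<lambda>w. if w = 1 then b else \<psi> (g1 w))"
  have fbU: "f b \<notin> U" using f_sphere_notU[OF b] .
  have hK: "h w \<in> cball 0 1 \<and> f (h w) = g1 w" if w: "w \<in> sphere 0 1" for w
  proof (cases "w = 1")
    case True
    then show ?thesis using b g1 by (simp add: h_def g1_def)
  next
    case False
    then have "g1 w \<in> U" using gU w by (auto simp: g1_def mem_Times_iff)
    then have "cmod (\<psi> (g1 w)) < 1" "f (\<psi> (g1 w)) = g1 w" using psi_U f_psi by auto
    then show ?thesis using False by (auto simp: h_def)
  qed
  have uniq: "v = h w" if w: "w \<in> sphere 0 1" and v: "v \<in> cball 0 1" "f v = g1 w" for w v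
  proof (cases "w = 1")
    case True
    then have fv: "f v = f b" using v g1 by (simp add: g1_def)
    have "v \<notin> ball 0 1"
    proof
      assume "v \<in> ball 0 1"
      then have "f v \<in> U" using f_ball by blast
      then show False using fv fbU by simp
    qed
    then have vs: "v \<in> sphere 0 1" using v by auto
    show ?thesis
    proof (rule ccontr)
      assume "v \<noteq> h w"
      then have "b \<noteq> v" using True by (simp add: h_def)
      then have "cutpoint (frontier U) (f b)" using two_pre_cut[OF b vs _ fv[symmetric]] by simp
      then show False using ncut by simp
    qed
  next
    case False
    then have gw: "g1 w \<in> U" using gU w by (auto simp: g1_def mem_Times_iff)
    then have "v \<notin> sphere 0 1" using f_sphere_notU v(2) by metis
    then have "v \<in> ball 0 1" using v by auto
    then have "v = \<psi> (f v)" using f_ball by simp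
    then show ?thesis using v False by (simp add: h_def)
  qed
  have ch: "continuous_on (sphere 0 1) h"
    by (rule cont_inv_lemma[OF compact_cball contf cg1 hK uniq])
  have cl: "closedin (top_of_set (cball 0 1)) (sphere (0::complex) 1)"
    by (rule closed_subset) auto
  have hs: "h ` sphere 0 1 \<subseteq> cball 0 1" using hK by blast
  have ne: "cball (0::complex) 1 \<noteq> {}" by simp
  then obtain H0 where H0: "continuous_on (cball 0 1) H0" "H0 ` cball 0 1 \<subseteq> cball 0 1"
      "\<And>x. x \<in> sphere 0 1 \<Longrightarrow> H0 x = h x"
    using Dugundji[OF convex_cball ne cl ch hs] by blast
  obtain G2 where G2: "continuous_on (cball 0 1) G2" "\<And>x. x \<in> sphere 0 1 \<Longrightarrow> G2 x = g2 x"
    using Tietze_unbounded[OF cg2 cl] by blast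
  define H where "H = (\<lambda>w. of_real (cmod w) * H0 w)"
  have cH: "continuous_on (cball 0 1) H" unfolding H_def by (intro continuous_intros H0(1))
  have Hc: "H w \<in> cball 0 1" if "w \<in> cball 0 1" for w
  proof -
    have "H0 w \<in> cball 0 1" using H0(2) that by blast
    then have "cmod (H0 w) \<le> 1" by simp
    moreover have "cmod w \<le> 1" using that by simp
    ultimately show ?thesis by (simp add: H_def norm_mult mult_le_one)
  qed
  have Hb: "H w \<in> ball 0 1" if "w \<in> ball 0 1" for w
  proof -
    have "w \<in> cball 0 1" using that by simp
    then have "H0 w \<in> cball 0 1" using H0(2) by blast
    then have n1: "cmod (H0 w) \<le> 1" by simp
    have "cmod w < 1" using that by simp
    have "cmod w * cmod (H0 w) \<le> cmod w * 1" using n1 by (intro mult_left_mono) auto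
    then have "cmod w * cmod (H0 w) < 1" using \<open>cmod w < 1\<close> by linarith
    then show ?thesis by (simp add: H_def norm_mult)
  qed
  have Hs: "H w = h w" if "w \<in> sphere 0 1" for w using that H0(3) by (simp add: H_def)
  define G where "G = (\<lambda>w. (f (H w), G2 w))"
  show ?thesis
  proof (intro exI conjI ballI)
    show "continuous_on (cball 0 1) G" unfolding G_def
      by (intro continuous_on_Pair continuous_on_compose2[OF contf cH] G2(1)) (use Hc in auto)
    show "G ` cball 0 1 \<subseteq> closure U \<times> UNIV" using fim Hc by (auto simp: G_def)
    fix z
    show "z \<in> sphere 0 1 \<Longrightarrow> G z = g z"
      using Hs hK G2(2) by (simp add: G_def g1_def g2_def)
    show "z \<in> ball 0 1 \<Longrightarrow> G z \<in> U \<times> UNIV" using Hb f_ball by (simp add: G_def)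
  qed
qed

lemma nofill:
  assumes b: "b \<in> sphere 0 1" and cut: "cutpoint (frontier U) (f b)"
  shows "\<exists>(t0::real) (g :: complex \<Rightarrow> complex \<times> real).
        continuous_on (sphere 0 1) g
      \<and> g ` sphere 0 1 \<subseteq> closure U \<times> UNIV
      \<and> g 1 = (f b, t0)
      \<and> (\<forall>\<theta>\<in>sphere 0 1 - {1}. g \<theta> \<in> U \<times> UNIV)
      \<and> \<not> (\<exists>G :: complex \<Rightarrow> complex \<times> real.
            continuous_on (cball 0 1) G
          \<and> G ` cball 0 1 \<subseteq> closure U \<times> UNIV
          \<and> (\<forall>z\<in>sphere 0 1. G z = g z)
          \<and> (\<forall>z\<in>ball 0 1. G z \<in> U \<times> UNIV))"
proof -
  obtain b' where b': "b' \<in> sphere 0 1" "b' \<noteq> b" "f b' = f b" using cut_two_pre[OF b cut] by blast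
  have bb: "b \<noteq> b'" "f b = f b'" using b' by auto
  note jc = jc_props[OF b b'(1) bb]
  define c where "c = f \<circ> gam b b'"
  define J where "J = path_image c"
  have sc: "simple_path c" and lc: "pathfinish c = pathstart c" and sb: "pathstart c = f b"
    using jc(1,2,3) by (simp_all add: c_def)
  have pc: "path c" using sc by (rule simple_path_imp_path)
  define p where "p = c \<circ> (\<lambda>z. Arg2pi z / (2 * pi))"
  have "homotopic_loops UNIV c c" using pc lc by (simp add: homotopic_loops_refl)
  then have "homotopic_with_canon (\<lambda>h. True) (sphere 0 1) UNIV p p"
    unfolding p_def by (rule homotopic_loops_imp_homotopic_circlemaps)
  then have cp: "continuous_on (sphere 0 1) p" using homotopic_with_imp_continuous by blast
  have argr: "Arg2pi z / (2 * pi) \<in> {0..<1}" for z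
    using Arg2pi[of z] pi_gt_zero by (auto simp: field_simps)
  have arg0: "Arg2pi z \<noteq> 0" if "z \<in> sphere 0 1" "z \<noteq> 1" for z
  proof
    assume a: "Arg2pi z = 0"
    have "exp (\<i> * of_real (Arg2pi z)) = z" using that complex_norm_eq_1_exp by simp
    then show False using a that(2) by simp
  qed
  have pJ: "p z \<in> J" for z
  proof -
    have "Arg2pi z / (2 * pi) \<in> {0..1}" using argr[of z] by auto
    then show ?thesis by (auto simp: p_def J_def path_image_def)
  qed
  have pU: "p z \<in> U" if "z \<in> sphere 0 1" "z \<noteq> 1" for z
  proof -
    have "0 \<le> Arg2pi z" using Arg2pi[of z] by simp
    then have "0 < Arg2pi z" using arg0[OF that] by linarith
    then have "0 < Arg2pi z / (2 * pi)" by simp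
    then have "Arg2pi z / (2 * pi) \<in> {0<..<1}" using argr[of z] by auto
    then show ?thesis using jc(7) f_ball by (simp add: p_def c_def)
  qed
  have pcl: "p z \<in> closure U" for z
  proof -
    define s where "s = Arg2pi z / (2 * pi)"
    have s: "0 \<le> s" "s \<le> 1" using argr[of z] by (auto simp: s_def)
    have "\<bar>1 - 2 * s\<bar> \<le> 1" using s by arith
    then have "gam b b' s \<in> cball 0 1"
      using gam_norm[of b b' s] b b'(1) by auto
    then have "gam b b' (Arg2pi z / (2 * pi)) \<in> cball 0 1" by (simp add: s_def)
    then show ?thesis using fim by (auto simp: p_def c_def)
  qed
  have A1: "Arg2pi 1 = 0" using Arg2pi_of_real[of 1] by simp
  have p1: "p 1 = f b" using sb by (simp add: p_def pathstart_def A1)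
  define g where "g = (\<lambda>z. (p z, 0::real))"
  show ?thesis
  proof (intro exI conjI)
    show "continuous_on (sphere 0 1) g" unfolding g_def by (intro continuous_intros cp)
    show "g ` sphere 0 1 \<subseteq> closure U \<times> UNIV" using pcl by (auto simp: g_def)
    show "g 1 = (f b, 0)" using p1 by (simp add: g_def)
    show "\<forall>\<theta>\<in>sphere 0 1 - {1}. g \<theta> \<in> U \<times> UNIV" using pU by (auto simp: g_def)
    show "\<not> (\<exists>G :: complex \<Rightarrow> complex \<times> real.
            continuous_on (cball 0 1) G
          \<and> G ` cball 0 1 \<subseteq> closure U \<times> UNIV
          \<and> (\<forall>z\<in>sphere 0 1. G z = g z)
          \<and> (\<forall>z\<in>ball 0 1. G z \<in> U \<times> UNIV))"
    proof
      assume "\<exists>G :: complex \<Rightarrow> complex \<times> real.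
            continuous_on (cball 0 1) G
          \<and> G ` cball 0 1 \<subseteq> closure U \<times> UNIV
          \<and> (\<forall>z\<in>sphere 0 1. G z = g z)
          \<and> (\<forall>z\<in>ball 0 1. G z \<in> U \<times> UNIV)"
      then obtain G :: "complex \<Rightarrow> complex \<times> real" where
        G: "continuous_on (cball 0 1) G" "\<forall>z\<in>sphere 0 1. G z = g z" "\<forall>z\<in>ball 0 1. G z \<in> U \<times> UNIV"
        by blast
      obtain q where q: "q \<in> frontier U" "q \<in> inside J" "q \<noteq> f b"
        using two_sides(1)[OF b b'(1) bb] by (auto simp: J_def c_def)
      note JIO = Jordan_inside_outside[OF sc lc]
      have "inside (path_image c) \<union> outside (path_image c) = - path_image c" using JIO by blast
      then have qJ: "q \<notin> J" using q(2) unfolding J_def by blast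
      have qU: "q \<notin> U" using q(1) opU by (simp add: frontier_def interior_open)
      define G1 where "G1 = (\<lambda>z. fst (G z))"
      have cG1: "continuous_on (cball 0 1) G1" unfolding G1_def by (intro continuous_intros G(1))
      have G1im: "G1 \<in> cball 0 1 \<rightarrow> - {q}"
      proof
        fix z :: complex assume z: "z \<in> cball 0 1"
        show "G1 z \<in> - {q}"
        proof (cases "z \<in> ball 0 1")
          case True
          then have "G1 z \<in> U" using G(3) by (auto simp: G1_def mem_Times_iff)
          then show ?thesis using qU by auto
        next
          case False
          then have "z \<in> sphere 0 1" using z by auto
          then have "G1 z = p z" using G(2) by (simp add: G1_def g_def)
          then show ?thesis using pJ[of z] qJ by auto
        qed
      qed
      obtain a where a: "homotopic_with_canon (\<lambda>h. True) (cball 0 1) (- {q}) G1 (\<lambda>x. a)"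
        using nullhomotopic_from_contractible[OF cG1 G1im convex_imp_contractible[OF convex_cball]] by blast
      then have "homotopic_with_canon (\<lambda>h. True) (sphere 0 1) (- {q}) G1 (\<lambda>x. a)"
        by (rule homotopic_with_subset_left) auto
      then have "homotopic_with_canon (\<lambda>h. True) (sphere 0 1) (- {q}) p (\<lambda>x. a)"
        by (rule homotopic_with_eq) (auto simp: G1_def g_def G(2))
      then have hl: "homotopic_loops (- {q}) (p \<circ> exp \<circ> (\<lambda>t. 2 * of_real pi * of_real t * \<i>))
                            ((\<lambda>x. a) \<circ> exp \<circ> (\<lambda>t. 2 * of_real pi * of_real t * \<i>))"
        by (rule homotopic_circlemaps_imp_homotopic_loops)
      have eqc: "c t = (p \<circ> exp \<circ> (\<lambda>t. 2 * of_real pi * of_real t * \<i>)) t" if t: "t \<in> {0..1}" for t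
      proof (cases "t = 1")
        case True
        have "exp (2 * of_real pi * \<i>) = 1" by (simp add: exp_eq_1)
        then have "(p \<circ> exp \<circ> (\<lambda>t. 2 * of_real pi * of_real t * \<i>)) t = c 0"
          using True by (simp add: p_def A1)
        then show ?thesis using lc True by (simp add: pathstart_def pathfinish_def)
      next
        case False
        then have t1: "0 \<le> t" "t < 1" using t by auto
        have "Arg2pi (exp (2 * of_real pi * of_real t * \<i>)) = 2 * pi * t"
          using t1 pi_gt_zero by (subst Arg2pi_exp) (auto simp: mult_less_cancel_left)
        then show ?thesis by (simp add: p_def)
      qed
      have "homotopic_loops (- {q}) c (p \<circ> exp \<circ> (\<lambda>t. 2 * of_real pi * of_real t * \<i>))"
        by (rule homotopic_loops_eq[OF pc _ lc eqc]) (use qJ in \<open>auto simp: J_def\<close>)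
      then have hc: "homotopic_loops (- {q}) c ((\<lambda>x. a) \<circ> exp \<circ> (\<lambda>t. 2 * of_real pi * of_real t * \<i>))"
        using hl by (rule homotopic_loops_trans)
      have aq: "a \<noteq> q"
        using homotopic_loops_imp_subset[OF hc] by (auto simp: path_image_def)
      have "winding_number c q = winding_number ((\<lambda>x. a) \<circ> exp \<circ> (\<lambda>t. 2 * of_real pi * of_real t * \<i>)) q"
        by (rule winding_number_homotopic_loops[OF hc])
      also have "\<dots> = winding_number (\<lambda>t. a) q" by (simp add: o_def)
      also have "\<dots> = 0" using aq by (rule winding_number_zero_const)
      finally have w0: "winding_number c q = 0" .
      show False
        using simple_closed_path_winding_number_inside[OF sc] q(2) w0 by (metis J_def one_neq_zero zero_neq_neg_one)
    qed
  qed
qed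
end

theorem mainTheorem11:
  fixes U :: "complex set" and \<psi> f :: "complex \<Rightarrow> complex" and b :: complex
  assumes "bounded U" and "open U" and "contractible U"
    and "locally connected (frontier U)"
    and "\<psi> holomorphic_on U" and "bij_betw \<psi> U (ball 0 1)"
    and "continuous_on (cball 0 1) f"
    and "\<forall>z\<in>ball 0 1. f z = inv_into U \<psi> z"
    and "f ` cball 0 1 \<subseteq> closure U"
    and "b \<in> sphere 0 1"
  shows "b \<notin> {x \<in> sphere 0 1. cutpoint (frontier U) (f x)}
    \<longleftrightarrow>
    (\<forall>(t0::real) (g :: complex \<Rightarrow> complex \<times> real).
        continuous_on (sphere 0 1) g
      \<and> g ` sphere 0 1 \<subseteq> closure U \<times> UNIV
      \<and> g 1 = (f b, t0)
      \<and> (\<forall>\<theta>\<in>sphere 0 1 - {1}. g \<theta> \<in> U \<times> UNIV)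
      \<longrightarrow> (\<exists>G :: complex \<Rightarrow> complex \<times> real.
            continuous_on (cball 0 1) G
          \<and> G ` cball 0 1 \<subseteq> closure U \<times> UNIV
          \<and> (\<forall>z\<in>sphere 0 1. G z = g z)
          \<and> (\<forall>z\<in>ball 0 1. G z \<in> U \<times> UNIV)))"
proof -
  interpret setting U \<psi> f
    by (unfold_locales) (use assms in auto)
  show ?thesis
  proof (cases "cutpoint (frontier U) (f b)")
    case True
    then have L: "b \<in> {x \<in> sphere 0 1. cutpoint (frontier U) (f x)}" using assms(10) by simp
    obtain t0 g where g: "continuous_on (sphere 0 1) g"
      "g ` sphere 0 1 \<subseteq> closure U \<times> UNIV" "g 1 = (f b, t0)"
      "\<forall>\<theta>\<in>sphere 0 1 - {1}. g \<theta> \<in> U \<times> UNIV"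
      "\<not> (\<exists>G :: complex \<Rightarrow> complex \<times> real.
            continuous_on (cball 0 1) G
          \<and> G ` cball 0 1 \<subseteq> closure U \<times> UNIV
          \<and> (\<forall>z\<in>sphere 0 1. G z = g z)
          \<and> (\<forall>z\<in>ball 0 1. G z \<in> U \<times> UNIV))"
      using nofill[OF assms(10) True] by blast
    show ?thesis using L g by blast
  next
    case False
    then have L: "b \<notin> {x \<in> sphere 0 1. cutpoint (frontier U) (f x)}" by simp
    show ?thesis
      using L fill[OF assms(10) False] by blast
  qed
qed

end
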